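(* For any integer $n \geq 1$, define the $n$-qubit state \[ \ket{\psi_n} := \sum_{1 \leq i \leq 2^n - 1} \frac{1}{\sqrt{n}\,\sqrt{2^{\lfloor \log_2 i \rfloor}}} \ket{i}. \] Then for every nonempty subset $S \subseteq [2^n]$ we have $\langle \psi_n | S \rangle \leq \dfrac{2+\sqrt{2}}{\sqrt{n}}$.
   Context: The computational basis of $n$ qubits is indexed by $[2^n] = \{1,\dots,2^n\}$, written $\ket{i}$. For a nonempty subset $S \subseteq [2^n]$, the subset state is $\ket{S} := \frac{1}{\sqrt{|S|}} \sum_{i \in S} \ket{i}$. *)

theory Defs
  imports Complex_Main
begin

text \<open>n-qubit states are represented as real amplitude vectors on the computational
basis, indexed by the naturals 1..2^n (amplitudes outside this range are irrelevant).
All amplitudes involved are real, so the inner product needs no conjugation.\<close>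

definition subset_state :: "nat set \<Rightarrow> nat \<Rightarrow> real" where
  "subset_state S i = (if i \<in> S then 1 / sqrt (real (card S)) else 0)"

definition psi :: "nat \<Rightarrow> nat \<Rightarrow> real" where
  "psi n i = (if 1 \<le> i \<and> i \<le> 2 ^ n - 1
              then 1 / (sqrt (real n) * sqrt (2 ^ nat \<lfloor>log 2 (real i)\<rfloor>))
              else 0)"

definition inner_qubits :: "nat \<Rightarrow> (nat \<Rightarrow> real) \<Rightarrow> (nat \<Rightarrow> real) \<Rightarrow> real" where
  "inner_qubits n u v = (\<Sum>i\<in>{1..2 ^ n}. u i * v i)"

end

theory Submission
  imports Defs
begin

lemma sqrt_sum_bound: "(\<Sum>i\<in>{1..s::nat}. 1 / sqrt (real i)) \<le> 2 * sqrt (real s)"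
proof (induction s)
  case 0 then show ?case by simp
next
  case (Suc s)
  define a where "a = sqrt (real s)"
  define b where "b = sqrt (real (Suc s))"
  have a0: "a \<ge> 0" unfolding a_def by simp
  have b0: "b > 0" unfolding b_def by simp
  have ab: "a \<le> b" unfolding a_def b_def by simp
  have bb: "b * b = a * a + 1" unfolding a_def b_def by simp
  have key: "2 * a + 1 / b \<le> 2 * b"
  proof -
    have "2 * a * b + 1 \<le> 2 * b * b" using bb
      proof -
      have "0 \<le> (a - b) * (a - b)" by simp
      then show ?thesis using bb by (simp add: algebra_simps)
    qed
    then show ?thesis using b0 by (simp add: field_simps)
  qed
  have "(\<Sum>i\<in>{1..Suc s}. 1 / sqrt (real i)) = (\<Sum>i\<in>{1..s}. 1 / sqrt (real i)) + 1 / b"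
    unfolding b_def by (simp add: sum.cl_ivl_Suc)
  also have "\<dots> \<le> 2 * a + 1 / b" using Suc.IH unfolding a_def by simp
  also have "\<dots> \<le> 2 * b" by (rule key)
  finally show ?case unfolding b_def .
qed

lemma rearr: "\<forall>S. finite S \<longrightarrow> card S = s \<longrightarrow> 0 \<notin> S \<longrightarrow>
   (\<Sum>i\<in>S. 1 / sqrt (real i)) \<le> (\<Sum>i\<in>{1..s::nat}. 1 / sqrt (real i))"
proof (induction s)
  case 0 then show ?case by simp
next
  case (Suc s)
  show ?case
  proof (intro allI impI)
    fix S :: "nat set" assume f: "finite S" and c: "card S = Suc s" and z: "0 \<notin> S"
    have ne: "S \<noteq> {}" using c by auto
    define m where "m = Max S"
    have mS: "m \<in> S" unfolding m_def using f ne by simp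
    have sub: "S \<subseteq> {1..m}" using z f unfolding m_def
      by (auto simp: Suc_le_eq) (metis gr0I)
    have "card S \<le> m" using card_mono[OF _ sub] by simp
    then have ms: "Suc s \<le> m" using c by simp
    have c2: "card (S - {m}) = s" using c mS f by simp
    have ih: "(\<Sum>i\<in>S - {m}. 1 / sqrt (real i)) \<le> (\<Sum>i\<in>{1..s}. 1 / sqrt (real i))"
      using Suc.IH f c2 z by auto
    have mm: "1 / sqrt (real m) \<le> 1 / sqrt (real (Suc s))"
      using ms by (intro divide_left_mono) auto
    have "(\<Sum>i\<in>S. 1 / sqrt (real i)) = (\<Sum>i\<in>S - {m}. 1 / sqrt (real i)) + 1 / sqrt (real m)"
      using f mS by (simp add: sum_diff1)
    also have "\<dots> \<le> (\<Sum>i\<in>{1..s}. 1 / sqrt (real i)) + 1 / sqrt (real (Suc s))"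
      using ih mm by simp
    also have "\<dots> = (\<Sum>i\<in>{1..Suc s}. 1 / sqrt (real i))"
      by (simp add: sum.cl_ivl_Suc)
    finally show "(\<Sum>i\<in>S. 1 / sqrt (real i)) \<le> (\<Sum>i\<in>{1..Suc s}. 1 / sqrt (real i))" .
  qed
qed

lemma level_bound:
  assumes "(i::nat) \<ge> 1"
  shows "1 / sqrt (2 ^ nat \<lfloor>log 2 (real i)\<rfloor>) \<le> sqrt 2 / sqrt (real i)"
proof -
  define k where "k = nat \<lfloor>log 2 (real i)\<rfloor>"
  have lg: "log 2 (real i) \<ge> 0" using assms by simp
  have kk: "real k = of_int \<lfloor>log 2 (real i)\<rfloor>" unfolding k_def using lg by simp
  have "log 2 (real i) < real k + 1" using kk by linarith
  then have "2 powr (log 2 (real i)) < 2 powr (real k + 1)" by simp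
  then have "real i < 2 powr (real k + 1)" using assms by simp
  also have "\<dots> = 2 * 2 ^ k" by (simp add: powr_add powr_realpow)
  finally have lt: "real i < 2 * 2 ^ k" .
  have p: "(0::real) < 2 ^ k" by simp
  have "sqrt (real i) \<le> sqrt 2 * sqrt (2 ^ k)"
    using lt by (simp add: real_sqrt_mult[symmetric])
  then have "sqrt (real i) / sqrt (2 ^ k) \<le> sqrt 2" using p
    by (simp add: divide_le_eq)
  then show ?thesis unfolding k_def[symmetric] using assms p
    by (simp add: field_simps)
qed

theorem mainTheorem3:
  fixes n :: nat and S :: "nat set"
  assumes "n \<ge> 1" and "S \<subseteq> {1..2 ^ n}" and "S \<noteq> {}"
  shows "inner_qubits n (psi n) (subset_state S) \<le> (2 + sqrt 2) / sqrt (real n)"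
proof -
  have f: "finite S" using assms(2) finite_subset by blast
  define s where "s = card S"
  have s0: "s > 0" unfolding s_def using f assms(3) by (simp add: card_gt_0_iff)
  have z: "0 \<notin> S" using assms(2) by auto
  have n0: "sqrt (real n) > 0" using assms(1) by simp
  have pb: "psi n i \<le> sqrt 2 / (sqrt (real n) * sqrt (real i))" if "i \<in> S" for i
  proof -
    have i1: "i \<ge> 1" using that assms(2) by auto
    have lb: "1 / sqrt (2 ^ nat \<lfloor>log 2 (real i)\<rfloor>) \<le> sqrt 2 / sqrt (real i)"
      by (rule level_bound[OF i1])
    show ?thesis
    proof (cases "i \<le> 2 ^ n - 1")
      case True
      have "psi n i = (1 / sqrt (real n)) * (1 / sqrt (2 ^ nat \<lfloor>log 2 (real i)\<rfloor>))"
        unfolding psi_def using True i1 by simp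
      also have "\<dots> \<le> (1 / sqrt (real n)) * (sqrt 2 / sqrt (real i))"
        using lb n0 by (intro mult_left_mono) auto
      finally show ?thesis by simp
    next
      case False then show ?thesis unfolding psi_def by simp
    qed
  qed
  have "inner_qubits n (psi n) (subset_state S) = (\<Sum>i\<in>S. psi n i * (1 / sqrt (real s)))"
    unfolding inner_qubits_def subset_state_def s_def
    by (rule sum.mono_neutral_cong_right) (use assms(2) in auto)
  also have "\<dots> \<le> (\<Sum>i\<in>S. sqrt 2 / (sqrt (real n) * sqrt (real i)) * (1 / sqrt (real s)))"
    using pb by (intro sum_mono mult_right_mono) auto
  also have "\<dots> = sqrt 2 / (sqrt (real n) * sqrt (real s)) * (\<Sum>i\<in>S. 1 / sqrt (real i))"
    unfolding sum_distrib_left by (rule sum.cong) (simp_all add: field_simps)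
  also have "\<dots> \<le> sqrt 2 / (sqrt (real n) * sqrt (real s)) * (2 * sqrt (real s))"
  proof (rule mult_left_mono)
    show "(\<Sum>i\<in>S. 1 / sqrt (real i)) \<le> 2 * sqrt (real s)"
      using rearr[rule_format, OF f s_def[symmetric] z] sqrt_sum_bound[of s] by linarith
  qed simp
  also have "\<dots> = 2 * sqrt 2 / sqrt (real n)" using s0 by simp
  also have "\<dots> \<le> (2 + sqrt 2) / sqrt (real n)"
  proof (rule divide_right_mono)
    have "sqrt 2 \<le> 2" using real_sqrt_le_mono[of 2 4] by simp
    then show "2 * sqrt 2 \<le> 2 + sqrt 2" by simp
  qed simp
  finally show ?thesis .
qed

end
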